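(* Let $K$ be a convex body in $\mathbb{R}^d$, let $x$ be a regular boundary point of $K$ with exterior normal unit vector $\xi$, and let $U$ be an open neighborhood of the set $-S(K,-\xi)+x$. Then there is an open neighborhood $V$ of $x$ such that for every $t\in\mathbb{R}^d\setminus\Delta(K)$, if $K+t$ intersects $V$ then $t\in U$.
   Context: A convex body is a compact convex set with nonempty interior. A boundary point is regular if $K$ has a unique support hyperplane there; its exterior normal unit vector $\xi$ satisfies $K\subset\{z:\langle z,\xi\rangle\le\langle x,\xi\rangle\}$. For a unit vector $\eta$, $S(K,\eta)=K\cap H(K,\eta)$, where $H(K,\eta)$ is the support hyperplane of $K$ with exterior normal $\eta$ (i.e. $S(K,\eta)$ is the set of maximizers of $\langle\cdot,\eta\rangle$ on $K$). $\Delta(K)=\{y: m(K\cap(K+y))>0\}$, $m$ Lebesgue measure. *)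

theory Defs
  imports "HOL-Analysis.Analysis"
begin

definition convex_body :: "'a::euclidean_space set \<Rightarrow> bool" where
  "convex_body K \<longleftrightarrow> compact K \<and> convex K \<and> interior K \<noteq> {}"

definition exterior_unit_normal :: "'a::euclidean_space set \<Rightarrow> 'a \<Rightarrow> 'a \<Rightarrow> bool" where
  "exterior_unit_normal K x xi \<longleftrightarrow> norm xi = 1 \<and> (\<forall>z\<in>K. z \<bullet> xi \<le> x \<bullet> xi)"

definition regular_boundary_point :: "'a::euclidean_space set \<Rightarrow> 'a \<Rightarrow> bool" where
  "regular_boundary_point K x \<longleftrightarrow> x \<in> frontier K \<and> (\<exists>!xi. exterior_unit_normal K x xi)"

definition support_set :: "'a::euclidean_space set \<Rightarrow> 'a \<Rightarrow> 'a set" where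
  "support_set K eta = {y \<in> K. \<forall>z\<in>K. z \<bullet> eta \<le> y \<bullet> eta}"

definition Delta :: "'a::euclidean_space set \<Rightarrow> 'a set" where
  "Delta K = {y. emeasure lebesgue (K \<inter> ((\<lambda>z. z + y) ` K)) > 0}"

end

theory Submission
  imports Defs
begin

lemma open_pos_measure:
  fixes O' :: "'a::euclidean_space set"
  assumes "open O'" "O' \<noteq> {}" "O' \<subseteq> S" "S \<in> sets lebesgue"
  shows "emeasure lebesgue S > 0"
proof -
  obtain y where "y \<in> O'" using assms(2) by auto
  then obtain e where e: "e > 0" "ball y e \<subseteq> O'" using assms(1) open_contains_ball by blast
  have "ennreal (measure lborel (ball y e)) = emeasure lebesgue (ball y e)"
    using emeasure_lborel_ball_finite[of y e] by (subst emeasure_eq_ennreal_measure) auto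
  moreover have "measure lborel (ball y e) > 0" using content_ball_pos e by blast
  moreover have "emeasure lebesgue (ball y e) \<le> emeasure lebesgue S"
    using e assms by (intro emeasure_mono) auto
  ultimately show ?thesis by (metis ennreal_less_zero_iff order_less_le_trans)
qed

lemma sep:
  fixes K :: "'a::euclidean_space set"
  assumes K: "convex_body K" and t: "t \<notin> Delta K"
  shows "\<exists>\<eta>. norm \<eta> = 1 \<and> (\<forall>z\<in>K. \<forall>w\<in>K. z \<bullet> \<eta> \<le> (w + t) \<bullet> \<eta>)"
proof -
  have cK: "compact K" "convex K" "interior K \<noteq> {}" using K unfolding convex_body_def by auto
  let ?I = "interior K" and ?J = "(\<lambda>w. w + t) ` interior K"
  have oJ: "open ?J" using open_translation[of ?I t] by (simp add: add.commute)
  have disj: "?I \<inter> ?J = {}"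
  proof (rule ccontr)
    assume ne: "?I \<inter> ?J \<noteq> {}"
    have sub: "?I \<inter> ?J \<subseteq> K \<inter> ((\<lambda>z. z + t) ` K)" using interior_subset by blast
    have "compact ((\<lambda>z. z + t) ` K)"
      using cK(1) by (intro compact_continuous_image) (auto intro!: continuous_intros)
    then have "K \<inter> ((\<lambda>z. z + t) ` K) \<in> sets lebesgue"
      proof -
      have "K \<inter> ((\<lambda>z. z + t) ` K) \<in> sets borel"
        using cK(1) \<open>compact ((\<lambda>z. z + t) ` K)\<close>
        by (intro sets.Int borel_closed compact_imp_closed)
      then show ?thesis by (simp add: sets_completionI_sets)
    qed
    then have "emeasure lebesgue (K \<inter> ((\<lambda>z. z + t) ` K)) > 0"
      using open_pos_measure[OF _ ne sub] oJ by auto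
    then show False using t unfolding Delta_def by auto
  qed
  have cJ: "convex ?J" using convex_translation[OF convex_interior[OF cK(2)], of t]
    by (simp add: add.commute)
  obtain a b where ab: "a \<noteq> 0" "\<forall>x\<in>?I. inner a x \<le> b" "\<forall>x\<in>?J. inner a x \<ge> b"
    using separating_hyperplane_sets[OF convex_interior[OF cK(2)] cJ] cK(3) disj by auto
  have clI: "closure ?I = K"
    using convex_closure_interior[OF cK(2,3)] cK(1) by (simp add: compact_imp_closed closure_closed)
  have h1: "K \<subseteq> {x. inner a x \<le> b}"
    using closure_minimal[of ?I "{x. inner a x \<le> b}"] ab(2) clI closed_halfspace_le by auto
  have h2: "K \<subseteq> {w. inner a w \<ge> b - inner a t}"
  proof -
    have "?I \<subseteq> {w. inner a w \<ge> b - inner a t}" using ab(3) by (auto simp: inner_add_right)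
    then show ?thesis using closure_minimal[OF _ closed_halfspace_ge] clI by metis
  qed
  define \<eta> where "\<eta> = a /\<^sub>R norm a"
  have "norm \<eta> = 1" using ab(1) by (simp add: \<eta>_def)
  moreover have "\<forall>z\<in>K. \<forall>w\<in>K. z \<bullet> \<eta> \<le> (w + t) \<bullet> \<eta>"
  proof (intro ballI)
    fix z w assume "z \<in> K" "w \<in> K"
    then have "inner a z \<le> b" "b - inner a t \<le> inner a w" using h1 h2 by auto
    then have "inner a z \<le> inner a (w + t)" by (simp add: inner_add_right)
    then show "z \<bullet> \<eta> \<le> (w + t) \<bullet> \<eta>" using ab(1)
      by (simp add: \<eta>_def inner_commute divide_right_mono)
  qed
  ultimately show ?thesis by blast
qed

theorem lemma4p3:
  fixes K :: "'a::euclidean_space set" and x xi :: 'a and U :: "'a set"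
  assumes "convex_body K"
    and "regular_boundary_point K x"
    and "exterior_unit_normal K x xi"
    and "open U"
    and "(\<lambda>s. x - s) ` support_set K (- xi) \<subseteq> U"
  shows "\<exists>V. open V \<and> x \<in> V \<and>
           (\<forall>t. t \<notin> Delta K \<longrightarrow> ((\<lambda>z. z + t) ` K) \<inter> V \<noteq> {} \<longrightarrow> t \<in> U)"
proof -
  have cK: "compact K" using assms(1) unfolding convex_body_def by auto
  have xK: "x \<in> K" using assms(2) cK frontier_subset_closed compact_imp_closed
    unfolding regular_boundary_point_def by blast
  have uniq: "\<And>\<eta>. exterior_unit_normal K x \<eta> \<Longrightarrow> \<eta> = xi"
    using assms(2,3) unfolding regular_boundary_point_def by blast
  obtain B where B: "\<forall>k\<in>K. norm k \<le> B" using cK compact_imp_bounded bounded_iff by blast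
  define R where "R = norm x + 1 + B"
  define H where "H = (\<Inter>z\<in>K. \<Inter>w\<in>K. {p::'a\<times>'a. z \<bullet> snd p \<le> (w + fst p) \<bullet> snd p})"
  define G where "G = ((cball 0 R - U) \<times> sphere 0 1) \<inter> H"
  have clH: "closed H" unfolding H_def
    by (intro closed_INT ballI closed_Collect_le continuous_intros)
  have cG: "compact G" unfolding G_def
    using assms(4) clH
    by (intro compact_Int_closed compact_Times) (auto intro: compact_Int_closed simp: Diff_eq open_closed)
  define A where "A = (\<lambda>(p, k). k + fst p) ` (G \<times> K)"
  have "compact A" unfolding A_def using cG cK
    by (intro compact_continuous_image compact_Times)
       (auto intro!: continuous_intros simp: case_prod_unfold)
  then have clA: "closed A" by (rule compact_imp_closed)
  have xA: "x \<notin> A"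
  proof
    assume "x \<in> A"
    then obtain t \<eta> k where tG: "(t, \<eta>) \<in> G" and kK: "k \<in> K" and xk: "x = k + t"
      unfolding A_def by auto
    have n1: "norm \<eta> = 1" and tU: "t \<notin> U" using tG unfolding G_def by auto
    have ineq: "\<forall>z\<in>K. \<forall>w\<in>K. z \<bullet> \<eta> \<le> (w + t) \<bullet> \<eta>" using tG unfolding G_def H_def by auto
    have "exterior_unit_normal K x \<eta>" unfolding exterior_unit_normal_def
      using n1 ineq kK xk by auto
    then have eq: "\<eta> = xi" by (rule uniq)
    have "k \<in> support_set K (- xi)" unfolding support_set_def
    proof (safe intro!: kK)
      fix z assume "z \<in> K"
      then have "x \<bullet> \<eta> \<le> (z + t) \<bullet> \<eta>" using ineq xK by blast
      then have "x \<bullet> xi \<le> (z + t) \<bullet> xi" using eq by simp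
      then show "z \<bullet> - xi \<le> k \<bullet> - xi" unfolding xk by (simp add: inner_add_left)
    qed
    then have "x - k \<in> U" using assms(5) by blast
    then show False using tU xk by simp
  qed
  define V where "V = ball x 1 - A"
  have "open V" unfolding V_def using clA by (intro open_Diff) auto
  moreover have "x \<in> V" unfolding V_def using xA by auto
  moreover have "\<forall>t. t \<notin> Delta K \<longrightarrow> ((\<lambda>z. z + t) ` K) \<inter> V \<noteq> {} \<longrightarrow> t \<in> U"
  proof (intro allI impI)
    fix t assume tD: "t \<notin> Delta K" and ne: "((\<lambda>z. z + t) ` K) \<inter> V \<noteq> {}"
    then obtain k where kK: "k \<in> K" and kV: "k + t \<in> V" by auto
    show "t \<in> U"
    proof (rule ccontr)
      assume tU: "t \<notin> U"
      obtain \<eta> where \<eta>: "norm \<eta> = 1" "\<forall>z\<in>K. \<forall>w\<in>K. z \<bullet> \<eta> \<le> (w + t) \<bullet> \<eta>"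
        using sep[OF assms(1) tD] by blast
      have "dist x (k + t) < 1" using kV unfolding V_def by auto
      then have "norm (k + t - x) < 1" by (simp add: dist_norm norm_minus_commute)
      moreover have "norm t \<le> norm (k + t - x) + norm x + norm k"
      proof -
        have "t = ((k + t - x) + x) - k" by simp
        then have "norm t \<le> norm ((k + t - x) + x) + norm k"
          by (metis norm_triangle_ineq4)
        moreover have "norm ((k + t - x) + x) \<le> norm (k + t - x) + norm x"
          by (rule norm_triangle_ineq)
        ultimately show ?thesis by linarith
      qed
      moreover have "norm k \<le> B" using B kK by blast
      ultimately have "norm t \<le> R" unfolding R_def by linarith
      then have "(t, \<eta>) \<in> G" unfolding G_def H_def using tU \<eta> by auto
      then have "k + t \<in> A" unfolding A_def using kK by force
      then show False using kV unfolding V_def by auto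
    qed
  qed
  ultimately show ?thesis by blast
qed

end
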